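(* Let $\mathcal P_s$ be the strong-identification parameter space defined below. Then $\inf_{(\theta,F)\in\mathcal P_s}\tau_{\min}(A_F)>0$, where $\tau_{\min}(A_F)$ denotes the smallest singular value of $A_F$.
   Context: General MTE setup. Observables are $(Y,D,Z)$ with $Y\in\mathbb R$, $D\in\{0,1\}$, $Z$ discrete with support $\{z_0,\dots,z_K\}$. Fix an integer $M\ge1$ and known continuous functions $h_1,\dots,h_M$ on $(0,1)$; set $\lambda_{10}=\lambda_{00}\equiv1$ and for $m=1,\dots,M$, $p\in(0,1)$: $\lambda_{1m}(p)=\frac1p\int_0^p h_m(u)du$, $\lambda_{0m}(p)=\frac1{1-p}\int_p^1 h_m(u)du$. For $p=(p(z_0),\dots,p(z_K))'\in(0,1)^{K+1}$ let $A_d(p)$ be the $(K+1)\times(M+1)$ matrix with $(\ell,m)$ entry $\lambda_{dm}(p(z_\ell))$ ($\ell=0,\dots,K$; $m=0,\dots,M$), and $A(p)=\mathrm{diag}(A_1(p),A_0(p))\in\mathbb R^{2(K+1)\times 2(M+1)}$. Parameters: $\theta=(\theta_1',\theta_0')'$, $\theta_d=(\theta_{d0},\dots,\theta_{dM})'=(\mu_d,\rho_{d1},\dots,\rho_{dM})'$. For a distribution $F$ of $(Y,D,Z)$: $q_F(z_\ell)=P_F(Z=z_\ell)$, $p_F(z_\ell)=P_F(D=1\mid Z=z_\ell)$, $p_F=(p_F(z_0),\dots,p_F(z_K))'$, $\beta_{F,d\ell}=E_F[Y\mid D=d,Z=z_\ell]$, $\beta_{F,d}=(\beta_{F,d0},\dots,\beta_{F,dK})'$,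 $\beta_F=(\beta_{F,1}',\beta_{F,0}')'$, $\sigma^2_{F,d\ell}=\mathrm{Var}_F(Y\mid D=d,Z=z_\ell)$, $A_F=A(p_F)$. Parameter space: fix $\delta,\zeta>0$, $\epsilon\in(0,1/2)$ and a compact $\Theta\subset\mathbb R^{2(M+1)}$ with nonempty interior. $\mathcal P$ is the set of pairs $(\theta,F)$ such that (i) $K\ge M$, $\theta\in\mathrm{int}(\Theta)$ and $A_F\theta=\beta_F$; (ii) $\sup_{d\in\{0,1\}}\sup_{\ell}E_F[|Y|^{2+\delta}\mid D=d,Z=z_\ell]\le\zeta$; (iii) $\epsilon\le p_F(z_\ell)\le 1-\epsilon$ for all $\ell$; (iv) $\epsilon\le q_F(z_\ell)\le1-\epsilon$ for all $\ell$; (v) $\sigma^2_{F,d\ell}\ge\epsilon$ for all $d,\ell$. Strong-identification parameter space: $\mathcal P_s$ is the set of $(\theta,F)\in\mathcal P$ (same $\delta,\zeta,\epsilon$) such that the families $\{\lambda_{1m}\}_{m=0}^M$ and $\{\lambda_{0m}\}_{m=0}^M$ are each unisolvent on $(0,1)$ (a set of $n$ functions $f_1,\dots,f_n$ is unisolvent on $\Omega$ if for any $n$ distinct points $x_1,\dots,x_n\in\Omega$ the matrix $(f_i(x_j))$ has nonzero determinant), and there exists an index set $\mathcal S\subseteq\{0,\dots,K\}$ with $|\mathcal S|=M+1$ and $\min_{j,k\in\mathcal S,j\ne k}|p_F(z_j)-p_F(z_k)|\ge\epsilon$. *)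

theory Defs
  imports "HOL-Probability.Probability_Measure" "Jordan_Normal_Form.Char_Poly"
begin

definition sing_min :: "real mat \<Rightarrow> real" where
  "sing_min A = sqrt (Min {k. eigenvalue (transpose_mat A * A) k})"

definition unisolvent :: "(nat \<Rightarrow> real \<Rightarrow> real) \<Rightarrow> nat \<Rightarrow> real set \<Rightarrow> bool" where
  "unisolvent f n \<Omega> \<longleftrightarrow>
     (\<forall>x :: nat \<Rightarrow> real. (\<forall>j<n. x j \<in> \<Omega>) \<and> inj_on x {..<n} \<longrightarrow>
        det (mat n n (\<lambda>(i, j). f i (x j))) \<noteq> 0)"

text \<open>d = True corresponds to D = 1, d = False to D = 0.\<close>
definition lam :: "(nat \<Rightarrow> real \<Rightarrow> real) \<Rightarrow> bool \<Rightarrow> nat \<Rightarrow> real \<Rightarrow> real" where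
  "lam h d m p =
     (if m = 0 then 1
      else if d then (1 / p) * integral {0..p} (h m)
      else (1 / (1 - p)) * integral {p..1} (h m))"

text \<open>A(p) = diag(A_1(p), A_0(p)), a 2(K+1) x 2(M+1) real matrix; p is indexed by 0..K.\<close>
definition Amat :: "(nat \<Rightarrow> real \<Rightarrow> real) \<Rightarrow> nat \<Rightarrow> nat \<Rightarrow> (nat \<Rightarrow> real) \<Rightarrow> real mat" where
  "Amat h K M p = mat (2 * (K + 1)) (2 * (M + 1)) (\<lambda>(r, c).
      if r < K + 1 \<and> c < M + 1 then lam h True c (p r)
      else if K + 1 \<le> r \<and> M + 1 \<le> c then lam h False (c - (M + 1)) (p (r - (K + 1)))
      else 0)"

text \<open>A distribution F of (Y,D,Z) is a probability measure on real x bool x nat; the support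
  point z_l of Z is encoded by its index l (l = 0..K).\<close>

definition obsY :: "real \<times> bool \<times> nat \<Rightarrow> real" where "obsY w = fst w"
definition obsD :: "real \<times> bool \<times> nat \<Rightarrow> bool" where "obsD w = fst (snd w)"
definition obsZ :: "real \<times> bool \<times> nat \<Rightarrow> nat" where "obsZ w = snd (snd w)"

definition cellZ :: "(real \<times> bool \<times> nat) measure \<Rightarrow> nat \<Rightarrow> (real \<times> bool \<times> nat) set" where
  "cellZ F l = {w \<in> space F. obsZ w = l}"

definition cellDZ :: "(real \<times> bool \<times> nat) measure \<Rightarrow> bool \<Rightarrow> nat \<Rightarrow> (real \<times> bool \<times> nat) set" where
  "cellDZ F d l = {w \<in> space F. obsD w = d \<and> obsZ w = l}"

definition qF :: "(real \<times> bool \<times> nat) measure \<Rightarrow> nat \<Rightarrow> real" where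
  "qF F l = measure F (cellZ F l)"

definition pF :: "(real \<times> bool \<times> nat) measure \<Rightarrow> nat \<Rightarrow> real" where
  "pF F l = measure F (cellDZ F True l) / measure F (cellZ F l)"

definition betaF :: "(real \<times> bool \<times> nat) measure \<Rightarrow> bool \<Rightarrow> nat \<Rightarrow> real" where
  "betaF F d l = (\<integral>w. obsY w * indicator (cellDZ F d l) w \<partial>F) / measure F (cellDZ F d l)"

definition sigma2F :: "(real \<times> bool \<times> nat) measure \<Rightarrow> bool \<Rightarrow> nat \<Rightarrow> real" where
  "sigma2F F d l = (\<integral>w. (obsY w - betaF F d l)\<^sup>2 * indicator (cellDZ F d l) w \<partial>F)
                     / measure F (cellDZ F d l)"

definition moment_bound :: "(real \<times> bool \<times> nat) measure \<Rightarrow> real \<Rightarrow> real \<Rightarrow> bool \<Rightarrow> nat \<Rightarrow> bool" where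
  "moment_bound F \<delta> \<zeta> d l \<longleftrightarrow>
     (\<integral>\<^sup>+ w. ennreal (\<bar>obsY w\<bar> powr (2 + \<delta>)) * indicator (cellDZ F d l) w \<partial>F)
       \<le> ennreal \<zeta> * emeasure F (cellDZ F d l)"

definition beta_vec :: "(real \<times> bool \<times> nat) measure \<Rightarrow> nat \<Rightarrow> real vec" where
  "beta_vec F K = vec (2 * (K + 1)) (\<lambda>r. if r < K + 1 then betaF F True r else betaF F False (r - (K + 1)))"

text \<open>R^n is represented by the functions nat => real vanishing from index n on
  (coordinates 0..n-1); the topology on it is the Euclidean one.\<close>
definition trunc_space :: "nat \<Rightarrow> (nat \<Rightarrow> real) set" where
  "trunc_space n = {x. \<forall>i\<ge>n. x i = 0}"

text \<open>Compactness and interior in R^n; the topology used is the product topology on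
  nat => real restricted to trunc_space n, which is the Euclidean topology of R^n.\<close>
definition eucl_compact :: "nat \<Rightarrow> (nat \<Rightarrow> real) set \<Rightarrow> bool" where
  "eucl_compact n S \<longleftrightarrow> S \<subseteq> trunc_space n \<and> compact S"

definition eucl_interior :: "nat \<Rightarrow> (nat \<Rightarrow> real) set \<Rightarrow> (nat \<Rightarrow> real) set" where
  "eucl_interior n S = {x. \<exists>U. openin (top_of_set (trunc_space n)) U \<and> x \<in> U \<and> U \<subseteq> S}"

definition inP ::
  "nat \<Rightarrow> nat \<Rightarrow> (nat \<Rightarrow> real \<Rightarrow> real) \<Rightarrow> real \<Rightarrow> real \<Rightarrow> real \<Rightarrow> (nat \<Rightarrow> real) set
    \<Rightarrow> (nat \<Rightarrow> real) \<Rightarrow> (real \<times> bool \<times> nat) measure \<Rightarrow> bool" where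
  "inP K M h \<delta> \<zeta> \<epsilon> \<Theta> \<theta> F \<longleftrightarrow>
     prob_space F \<and>
     sets F = sets (borel \<Otimes>\<^sub>M count_space UNIV \<Otimes>\<^sub>M count_space UNIV) \<and>
     measure F {w \<in> space F. obsZ w \<le> K} = 1 \<and>
     K \<ge> M \<and>
     \<theta> \<in> eucl_interior (2 * (M + 1)) \<Theta> \<and>
     Amat h K M (pF F) *\<^sub>v vec (2 * (M + 1)) \<theta> = beta_vec F K \<and>
     (\<forall>d l. l \<le> K \<longrightarrow> moment_bound F \<delta> \<zeta> d l) \<and>
     (\<forall>l\<le>K. \<epsilon> \<le> pF F l \<and> pF F l \<le> 1 - \<epsilon>) \<and>
     (\<forall>l\<le>K. \<epsilon> \<le> qF F l \<and> qF F l \<le> 1 - \<epsilon>) \<and>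
     (\<forall>d l. l \<le> K \<longrightarrow> sigma2F F d l \<ge> \<epsilon>)"

definition inPs ::
  "nat \<Rightarrow> nat \<Rightarrow> (nat \<Rightarrow> real \<Rightarrow> real) \<Rightarrow> real \<Rightarrow> real \<Rightarrow> real \<Rightarrow> (nat \<Rightarrow> real) set
    \<Rightarrow> (nat \<Rightarrow> real) \<Rightarrow> (real \<times> bool \<times> nat) measure \<Rightarrow> bool" where
  "inPs K M h \<delta> \<zeta> \<epsilon> \<Theta> \<theta> F \<longleftrightarrow>
     inP K M h \<delta> \<zeta> \<epsilon> \<Theta> \<theta> F \<and>
     unisolvent (lam h True) (M + 1) {0<..<1} \<and>
     unisolvent (lam h False) (M + 1) {0<..<1} \<and>
     (\<exists>S \<subseteq> {..K}. card S = M + 1 \<and>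
        (\<forall>j\<in>S. \<forall>k\<in>S. j \<noteq> k \<longrightarrow> \<bar>pF F j - pF F k\<bar> \<ge> \<epsilon>))"

end

theory Submission
  imports Defs "Jordan_Normal_Form.Spectral_Radius"
begin

lemma det_mat_cont:
  fixes G :: "'a::topological_space \<Rightarrow> nat \<Rightarrow> nat \<Rightarrow> real"
  assumes "\<And>i j. i < n \<Longrightarrow> j < n \<Longrightarrow> continuous_on X (\<lambda>x. G x i j)"
  shows "continuous_on X (\<lambda>x. det (mat n n (\<lambda>(i,j). G x i j)))"
proof -
  have eq: "det (mat n n (\<lambda>(i,j). G x i j)) = (\<Sum>p\<in>{p. p permutes {0..<n}}. signof p * (\<Prod>i=0..<n. G x i (p i)))" for x
    unfolding det_def by (auto intro!: sum.cong prod.cong simp: permutes_in_image)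
  show ?thesis unfolding eq
    by (intro continuous_intros assms, auto simp: permutes_in_image)
qed

lemma adj_mat_cont:
  fixes G :: "'a::topological_space \<Rightarrow> nat \<Rightarrow> nat \<Rightarrow> real"
  assumes "\<And>i j. i < n \<Longrightarrow> j < n \<Longrightarrow> continuous_on X (\<lambda>x. G x i j)"
    and "a < n" "b < n"
  shows "continuous_on X (\<lambda>x. adj_mat (mat n n (\<lambda>(i,j). G x i j)) $$ (a,b))"
proof -
  have eq: "adj_mat (mat n n (\<lambda>(i,j). G x i j)) $$ (a,b) = (-1)^(b+a) *
     det (mat (n-1) (n-1) (\<lambda>(i,j). G x (if i < b then i else Suc i) (if j < a then j else Suc j)))" for x
    using assms(2,3) unfolding adj_mat_def cofactor_def mat_delete_def
    by (auto intro!: arg_cong[where f=det] simp: )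
  show ?thesis unfolding eq
    by (intro continuous_intros det_mat_cont assms, auto)
qed

lemma compact_box: "compact {x::nat\<Rightarrow>real. \<forall>j. x j \<in> (if j<n then {a..b} else {0})}"
proof -
  have eq: "{x::nat\<Rightarrow>real. \<forall>j. x j \<in> (if j<n then {a..b} else {0})} = PiE UNIV (\<lambda>j. if j<n then {a..b} else {0})"
    by (auto simp: PiE_def Pi_def)
  have "compactin (product_topology (\<lambda>i. euclidean) UNIV) (PiE UNIV (\<lambda>j. if j<n then {a..b::real} else {0}))"
    by (subst compactin_PiE) auto
  then show ?thesis unfolding eq euclidean_product_topology by simp
qed

lemma closed_sep: "closed {x::nat\<Rightarrow>real. \<forall>j<n. \<forall>k<n. j \<noteq> k \<longrightarrow> e \<le> \<bar>x j - x k\<bar>}"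
  by (intro closed_Collect_all closed_Collect_imp closed_Collect_le continuous_intros) auto

lemma adj_ineq:
  fixes T :: "real mat"
  assumes T: "T \<in> carrier_mat n n"
  shows "(det T)^2 * (\<Sum>i<n. (u i)^2) \<le> (\<Sum>i<n. \<Sum>j<n. (adj_mat T $$ (i,j))^2) * (\<Sum>j<n. ((T *\<^sub>v vec n u) $ j)^2)"
proof -
  let ?w = "T *\<^sub>v vec n u"
  have A: "adj_mat T \<in> carrier_mat n n" using adj_mat(1)[OF T] .
  have "adj_mat T *\<^sub>v ?w = (adj_mat T * T) *\<^sub>v vec n u"
    using T A by (simp add: assoc_mult_mat_vec)
  also have "\<dots> = det T \<cdot>\<^sub>v vec n u" unfolding adj_mat(3)[OF T]
    by (rule eq_vecI, auto simp: row_smult)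
  finally have eq: "adj_mat T *\<^sub>v ?w = det T \<cdot>\<^sub>v vec n u" .
  have comp: "det T * u i = (\<Sum>j<n. adj_mat T $$ (i,j) * ?w $ j)" if "i<n" for i
  proof -
    have "(adj_mat T *\<^sub>v ?w) $ i = (det T \<cdot>\<^sub>v vec n u) $ i" using eq by simp
    then show ?thesis using that T A
      by (auto simp: scalar_prod_def row_def lessThan_atLeast0)
  qed
  have ci: "(det T * u i)^2 \<le> (\<Sum>j<n. (adj_mat T $$ (i,j))^2) * (\<Sum>j<n. (?w$j)^2)" if "i<n" for i
    unfolding comp[OF that] by (rule Cauchy_Schwarz_ineq_sum)
  have "(det T)^2 * (\<Sum>i<n. (u i)^2) = (\<Sum>i<n. (det T * u i)^2)"
    by (simp add: sum_distrib_left power_mult_distrib)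
  also have "\<dots> \<le> (\<Sum>i<n. (\<Sum>j<n. (adj_mat T $$ (i,j))^2) * (\<Sum>j<n. (?w$j)^2))"
    by (rule sum_mono, rule ci) auto
  also have "\<dots> = (\<Sum>i<n. \<Sum>j<n. (adj_mat T $$ (i,j))^2) * (\<Sum>j<n. (?w$j)^2)"
    by (simp add: sum_distrib_right)
  finally show ?thesis .
qed

lemma core:
  fixes f :: "nat \<Rightarrow> real \<Rightarrow> real"
  assumes cont: "\<And>i. i < n \<Longrightarrow> continuous_on {a..b} (f i)"
    and unis: "\<And>x. (\<forall>j<n. x j \<in> {a..b}) \<Longrightarrow> (\<forall>j<n. \<forall>k<n. j\<noteq>k \<longrightarrow> e \<le> \<bar>x j - x k\<bar>)
       \<Longrightarrow> det (mat n n (\<lambda>(i,j). f i (x j))) \<noteq> 0"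
  shows "\<exists>c>0. \<forall>x u. (\<forall>j<n. x j \<in> {a..b}) \<longrightarrow> (\<forall>j<n. \<forall>k<n. j\<noteq>k \<longrightarrow> e \<le> \<bar>x j - x k\<bar>) \<longrightarrow>
      c * (\<Sum>i<n. (u i)^2) \<le> (\<Sum>j<n. (\<Sum>i<n. f i (x j) * u i)^2)"
proof -
  define X where "X = {x::nat\<Rightarrow>real. \<forall>j. x j \<in> (if j<n then {a..b} else {0})}
     \<inter> {x. \<forall>j<n. \<forall>k<n. j \<noteq> k \<longrightarrow> e \<le> \<bar>x j - x k\<bar>}"
  have cX: "compact X" unfolding X_def by (intro compact_Int_closed compact_box closed_sep)
  define T where "T x = mat n n (\<lambda>(j,i). f i (x j))" for x :: "nat \<Rightarrow> real"
  define Q where "Q x = (\<Sum>i<n. \<Sum>j<n. (adj_mat (T x) $$ (i,j))^2)" for x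
  define \<phi> where "\<phi> x = (det (T x))^2 / (1 + Q x)" for x
  have Tc: "T x \<in> carrier_mat n n" for x unfolding T_def by simp
  have Qnn: "0 \<le> Q x" for x unfolding Q_def by (intro sum_nonneg) auto
  have ent: "continuous_on X (\<lambda>x. f j (x i))" if "i<n" "j<n" for i j
    by (rule continuous_on_compose2[OF cont[OF that(2)]]) (auto simp: X_def that intro: continuous_on_subset[OF continuous_on_product_coordinates])
  have cphi: "continuous_on X \<phi>"
    unfolding \<phi>_def Q_def T_def
    using Qnn unfolding Q_def T_def
    by (intro continuous_intros det_mat_cont[of n X "\<lambda>x i j. f j (x i)", simplified]
         adj_mat_cont[of n X "\<lambda>x i j. f j (x i)", simplified] ent)
       (auto simp: add_nonneg_eq_0_iff)
  have dnz: "det (T x) \<noteq> 0" if "x \<in> X" for x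
  proof -
    have "T x = transpose_mat (mat n n (\<lambda>(i,j). f i (x j)))" unfolding T_def by auto
    then have "det (T x) = det (mat n n (\<lambda>(i,j). f i (x j)))" using det_transpose[of "mat n n (\<lambda>(i,j). f i (x j))" n] by simp
    then show ?thesis using unis[of x] that unfolding X_def by (auto split: if_splits; metis less_irrefl)
  qed
  have ppos: "\<phi> x > 0" if "x \<in> X" for x
    unfolding \<phi>_def using dnz[OF that] Qnn[of x] by auto
  have key: "\<phi> x * (\<Sum>i<n. (u i)^2) \<le> (\<Sum>j<n. (\<Sum>i<n. f i (x j) * u i)^2)" for x u
  proof -
    have w: "(T x *\<^sub>v vec n u) $ j = (\<Sum>i<n. f i (x j) * u i)" if "j<n" for j
      using that unfolding T_def by (auto simp: scalar_prod_def row_def lessThan_atLeast0 intro!: sum.cong)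
    have "(det (T x))^2 * (\<Sum>i<n. (u i)^2) \<le> Q x * (\<Sum>j<n. ((T x *\<^sub>v vec n u) $ j)^2)"
      unfolding Q_def by (rule adj_ineq[OF Tc])
    also have "\<dots> = Q x * (\<Sum>j<n. (\<Sum>i<n. f i (x j) * u i)^2)" using w by simp
    also have "\<dots> \<le> (1 + Q x) * (\<Sum>j<n. (\<Sum>i<n. f i (x j) * u i)^2)"
      by (intro mult_right_mono) (auto intro: sum_nonneg)
    finally show ?thesis unfolding \<phi>_def using Qnn[of x]
      by (simp add: field_simps)
  qed
  show ?thesis
  proof (cases "X = {}")
    case True
    show ?thesis
    proof (intro exI[of _ 1] conjI allI impI)
      fix x :: "nat \<Rightarrow> real" and u
      assume h: "\<forall>j<n. x j \<in> {a..b}" "\<forall>j<n. \<forall>k<n. j\<noteq>k \<longrightarrow> e \<le> \<bar>x j - x k\<bar>"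
      have "(\<lambda>j. if j < n then x j else 0) \<in> X" using h unfolding X_def by auto
      with True show "1 * (\<Sum>i<n. (u i)^2) \<le> (\<Sum>j<n. (\<Sum>i<n. f i (x j) * u i)^2)" by auto
    qed simp
  next
    case False
    obtain x0 where x0: "x0 \<in> X" "\<And>y. y \<in> X \<Longrightarrow> \<phi> x0 \<le> \<phi> y"
      using continuous_attains_inf[OF cX False cphi] by auto
    show ?thesis
    proof (intro exI[of _ "\<phi> x0"] conjI allI impI)
      show "\<phi> x0 > 0" using ppos[OF x0(1)] .
      fix x :: "nat \<Rightarrow> real" and u
      assume h: "\<forall>j<n. x j \<in> {a..b}" "\<forall>j<n. \<forall>k<n. j\<noteq>k \<longrightarrow> e \<le> \<bar>x j - x k\<bar>"
      define x' where "x' = (\<lambda>j. if j < n then x j else 0)"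
      have x'X: "x' \<in> X" using h unfolding X_def x'_def by auto
      have eqs: "(\<Sum>j<n. (\<Sum>i<n. f i (x' j) * u i)^2) = (\<Sum>j<n. (\<Sum>i<n. f i (x j) * u i)^2)"
        unfolding x'_def by (intro sum.cong) auto
      have "\<phi> x0 * (\<Sum>i<n. (u i)^2) \<le> \<phi> x' * (\<Sum>i<n. (u i)^2)"
        by (intro mult_right_mono x0(2) x'X) (auto intro: sum_nonneg)
      also have "\<dots> \<le> (\<Sum>j<n. (\<Sum>i<n. f i (x j) * u i)^2)" using key[of x' u] eqs by simp
      finally show "\<phi> x0 * (\<Sum>i<n. (u i)^2) \<le> (\<Sum>j<n. (\<Sum>i<n. f i (x j) * u i)^2)" .
    qed
  qed
qed

lemma real_sym_eigenvalue_exists: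
  fixes B :: "real mat"
  assumes B: "B \<in> carrier_mat m m" and m: "m > 0" and sym: "\<And>i j. i < m \<Longrightarrow> j < m \<Longrightarrow> B $$ (i,j) = B $$ (j,i)"
  shows "\<exists>k. eigenvalue B k"
proof -
  let ?Bc = "map_mat complex_of_real B"
  have Bc: "?Bc \<in> carrier_mat m m" using B by simp
  obtain l where "l \<in> spectrum ?Bc" using spectrum_non_empty[OF Bc m] by auto
  then obtain v where ev: "eigenvector ?Bc v l" unfolding spectrum_def eigenvalue_def by auto
  then have v: "v \<in> carrier_vec m" "v \<noteq> 0\<^sub>v m" "?Bc *\<^sub>v v = l \<cdot>\<^sub>v v" unfolding eigenvector_def using Bc by auto
  have comp: "(?Bc *\<^sub>v v) $ i = (\<Sum>j<m. of_real (B $$ (i,j)) * v $ j)" if "i < m" for i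
    using that B v(1) by (auto simp: scalar_prod_def row_def lessThan_atLeast0 intro!: sum.cong)
  define s where "s = (\<Sum>i<m. cnj (v$i) * (?Bc *\<^sub>v v)$i)"
  have s1: "s = l * (\<Sum>i<m. cnj (v$i) * v$i)"
    unfolding s_def v(3) using v(1) by (auto simp: sum_distrib_left intro!: sum.cong)
  have s2: "s = (\<Sum>i<m. \<Sum>j<m. cnj (v$i) * of_real (B $$ (i,j)) * v$j)"
    unfolding s_def by (intro sum.cong refl) (auto simp: comp sum_distrib_left mult.assoc)
  have "cnj s = (\<Sum>i<m. \<Sum>j<m. v$i * of_real (B $$ (i,j)) * cnj (v$j))"
    unfolding s2 by simp
  also have "\<dots> = (\<Sum>j<m. \<Sum>i<m. v$i * of_real (B $$ (i,j)) * cnj (v$j))"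
    by (rule sum.swap)
  also have "\<dots> = s" unfolding s2
    by (intro sum.cong refl) (auto simp: sym mult.commute mult.left_commute)
  finally have cs: "cnj s = s" .
  define N where "N = (\<Sum>i<m. (cmod (v$i))^2)"
  have NN: "(\<Sum>i<m. cnj (v$i) * v$i) = of_real N"
    unfolding N_def of_real_sum by (intro sum.cong refl) (metis complex_norm_square mult.commute of_real_power)
  obtain i where i: "i < m" "v $ i \<noteq> 0" using v(1,2) by (metis carrier_vecD eq_vecI index_zero_vec(1,2))
  have "0 < (cmod (v$i))^2" using i by simp
  also have "\<dots> \<le> N" unfolding N_def using i by (intro member_le_sum) auto
  finally have Npos: "N > 0" .
  have l: "l = s / of_real N" using s1 NN Npos by (simp add: field_simps)
  have "cnj l = l" unfolding l using cs by simp
  then have "l \<in> \<real>" using Reals_cnj_iff by blast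
  then obtain r where r: "l = of_real r" by (auto elim: Reals_cases)
  have "eigenvalue ?Bc l" using ev unfolding eigenvalue_def by auto
  then have "poly (char_poly ?Bc) (of_real r) = 0" using eigenvalue_root_char_poly[OF Bc] r by auto
  then have "poly (char_poly B) r = 0" unfolding of_real_hom.char_poly_hom[OF B] by simp
  then show ?thesis using eigenvalue_root_char_poly[OF B] by auto
qed

lemma real_vec_sq_pos:
  fixes v :: "real vec"
  assumes "v \<in> carrier_vec n" "v \<noteq> 0\<^sub>v n"
  shows "v \<bullet> v > 0"
  using conjugate_square_greater_0_vec[OF assms(1)] assms(2) by simp

lemma sing_min_ge:
  fixes A :: "real mat"
  assumes A: "A \<in> carrier_mat r m" and m: "m > 0"
    and bnd: "\<And>v. v \<in> carrier_vec m \<Longrightarrow> c * (v \<bullet> v) \<le> (A *\<^sub>v v) \<bullet> (A *\<^sub>v v)"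
  shows "sqrt c \<le> sing_min A"
proof -
  let ?B = "transpose_mat A * A"
  have B: "?B \<in> carrier_mat m m" using A by auto
  have tB: "transpose_mat ?B = ?B" using A by (simp add: transpose_mult)
  have sym: "?B $$ (i,j) = ?B $$ (j,i)" if "i < m" "j < m" for i j
  proof -
    have "?B $$ (i,j) = transpose_mat ?B $$ (i,j)" using tB by simp
    also have "\<dots> = ?B $$ (j,i)" using that B by (intro index_transpose_mat(1)) auto
    finally show ?thesis .
  qed
  define E where "E = {k. eigenvalue ?B k}"
  have fin: "finite E" using card_finite_spectrum(1)[OF B] unfolding E_def spectrum_def .
  have ne: "E \<noteq> {}" using real_sym_eigenvalue_exists[OF B m sym] unfolding E_def by auto
  have lb: "c \<le> k" if kE: "k \<in> E" for k
  proof -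
    obtain v where v: "v \<in> carrier_vec m" "v \<noteq> 0\<^sub>v m" "?B *\<^sub>v v = k \<cdot>\<^sub>v v"
    proof -
      have "eigenvalue ?B k" using kE unfolding E_def by simp
      then show ?thesis using that B unfolding eigenvalue_def eigenvector_def by (auto simp del: carrier_matD)
    qed
    have "(A *\<^sub>v v) \<bullet> (A *\<^sub>v v) = (transpose_mat A *\<^sub>v (A *\<^sub>v v)) \<bullet> v"
      using transpose_vec_mult_scalar[OF A v(1), of "A *\<^sub>v v"] A v(1) by auto
    also have "\<dots> = (?B *\<^sub>v v) \<bullet> v" using A v(1) by (simp add: assoc_mult_mat_vec)
    also have "\<dots> = k * (v \<bullet> v)" using v by simp
    finally have "c * (v \<bullet> v) \<le> k * (v \<bullet> v)" using bnd[OF v(1)] by simp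
    then show ?thesis using real_vec_sq_pos[OF v(1,2)] by simp
  qed
  have "c \<le> Min E" using fin ne lb by simp
  then show ?thesis unfolding sing_min_def E_def by simp
qed

lemma sum_split2: "(\<Sum>c<n + n. g c) = (\<Sum>c<n. g c) + (\<Sum>c<n. g (n + c :: nat))"
proof -
  have "(\<Sum>c<n + n. g c) = sum g {0..<n} + sum g {n..<n+n}"
    unfolding lessThan_atLeast0 by (rule sum.atLeastLessThan_concat[symmetric]) auto
  also have "sum g {n..<n+n} = (\<Sum>c<n. g (n + c))"
    using sum.shift_bounds_nat_ivl[of g 0 n n] by (simp add: lessThan_atLeast0 add.commute)
  finally show ?thesis by (simp add: lessThan_atLeast0)
qed

lemma lam_cont:
  assumes cont: "\<And>m. m \<in> {1..M} \<Longrightarrow> continuous_on {0<..<1} (h m)"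
    and int: "\<And>m. m \<in> {1..M} \<Longrightarrow> h m integrable_on {0..1}"
    and e: "0 < \<epsilon>" "\<epsilon> < 1/2" and i: "i < M + 1"
  shows "continuous_on {\<epsilon>..1-\<epsilon>} (lam h d i)"
proof (cases "i = 0")
  case True
  then show ?thesis unfolding lam_def by simp
next
  case False
  then have im: "i \<in> {1..M}" using i by auto
  have sub: "{\<epsilon>..1-\<epsilon>} \<subseteq> {0..1}" using e by auto
  show ?thesis
  proof (cases d)
    case True
    have eq: "lam h d i = (\<lambda>p. (1 / p) * integral {0..p} (h i))"
      using False True unfolding lam_def by auto
    have c1: "continuous_on {\<epsilon>..1-\<epsilon>} (\<lambda>p. integral {0..p} (h i))"
      by (rule continuous_on_subset[OF indefinite_integral_continuous_1[OF int[OF im]] sub])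
    show ?thesis unfolding eq using e
      by (intro continuous_intros c1) auto
  next
    case False2: False
    have eq: "lam h d i = (\<lambda>p. (1 / (1 - p)) * integral {p..1} (h i))"
      using False False2 unfolding lam_def by auto
    have c1: "continuous_on {\<epsilon>..1-\<epsilon>} (\<lambda>p. integral {p..1} (h i))"
      by (rule continuous_on_subset[OF indefinite_integral_continuous_1'[OF int[OF im]] sub])
    show ?thesis unfolding eq using e
      by (intro continuous_intros c1) auto
  qed
qed

lemma Amat_row1:
  assumes "r < K + 1" "v \<in> carrier_vec (2 * (M + 1))"
  shows "(Amat h K M p *\<^sub>v v) $ r = (\<Sum>i<M+1. lam h True i (p r) * v $ i)"
proof -
  have "(Amat h K M p *\<^sub>v v) $ r = (\<Sum>c<(M+1)+(M+1). Amat h K M p $$ (r,c) * v $ c)"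
    using assms unfolding Amat_def by (auto simp: scalar_prod_def row_def lessThan_atLeast0 mult_2 intro!: sum.cong)
  also have "\<dots> = (\<Sum>i<M+1. lam h True i (p r) * v $ i)"
    unfolding sum_split2 using assms(1) unfolding Amat_def by auto
  finally show ?thesis .
qed

lemma Amat_row0:
  assumes "l < K + 1" "v \<in> carrier_vec (2 * (M + 1))"
  shows "(Amat h K M p *\<^sub>v v) $ (K + 1 + l) = (\<Sum>i<M+1. lam h False i (p l) * v $ (M + 1 + i))"
proof -
  have "(Amat h K M p *\<^sub>v v) $ (K + 1 + l) = (\<Sum>c<(M+1)+(M+1). Amat h K M p $$ (K+1+l,c) * v $ c)"
    using assms unfolding Amat_def by (auto simp: scalar_prod_def row_def lessThan_atLeast0 mult_2 intro!: sum.cong)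
  also have "\<dots> = (\<Sum>i<M+1. lam h False i (p l) * v $ (M + 1 + i))"
    unfolding sum_split2 using assms(1) unfolding Amat_def by auto
  finally show ?thesis .
qed

lemma core_d:
  assumes cont: "\<And>m. m \<in> {1..M} \<Longrightarrow> continuous_on {0<..<1} (h m)"
    and int: "\<And>m. m \<in> {1..M} \<Longrightarrow> h m integrable_on {0..1}"
    and e: "0 < \<epsilon>" "\<epsilon> < 1/2"
    and U: "unisolvent (lam h d) (M + 1) {0<..<1}"
  shows "\<exists>c>0. \<forall>x u. (\<forall>j<M+1. x j \<in> {\<epsilon>..1-\<epsilon>}) \<longrightarrow> (\<forall>j<M+1. \<forall>k<M+1. j\<noteq>k \<longrightarrow> \<epsilon> \<le> \<bar>x j - x k\<bar>) \<longrightarrow>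
      c * (\<Sum>i<M+1. (u i)^2) \<le> (\<Sum>j<M+1. (\<Sum>i<M+1. lam h d i (x j) * u i)^2)"
proof (rule core)
  show "continuous_on {\<epsilon>..1-\<epsilon>} (lam h d i)" if "i < M + 1" for i
    by (rule lam_cont[OF cont int e that])
  fix x :: "nat \<Rightarrow> real"
  assume h1: "\<forall>j<M+1. x j \<in> {\<epsilon>..1-\<epsilon>}" and h2: "\<forall>j<M+1. \<forall>k<M+1. j\<noteq>k \<longrightarrow> \<epsilon> \<le> \<bar>x j - x k\<bar>"
  have "\<forall>j<M+1. x j \<in> {0<..<1}" using h1 e by auto
  moreover have "inj_on x {..<M+1}"
  proof (rule inj_onI)
    fix j k assume "j \<in> {..<M+1}" "k \<in> {..<M+1}" "x j = x k"
    then show "j = k" using h2 e by (metis abs_zero diff_self lessThan_iff not_le)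
  qed
  ultimately show "det (mat (M+1) (M+1) (\<lambda>(i,j). lam h d i (x j))) \<noteq> 0"
    using U unfolding unisolvent_def by auto
qed

theorem lemmaB1:
  fixes K M :: nat and h :: "nat \<Rightarrow> real \<Rightarrow> real"
    and \<delta> \<zeta> \<epsilon> :: real and \<Theta> :: "(nat \<Rightarrow> real) set"
  assumes "M \<ge> 1"
    and "\<And>m. m \<in> {1..M} \<Longrightarrow> continuous_on {0<..<1} (h m)"
    and "\<And>m. m \<in> {1..M} \<Longrightarrow> h m integrable_on {0..1}"
    and "\<delta> > 0" and "\<zeta> > 0" and "0 < \<epsilon>" and "\<epsilon> < 1 / 2"
    and "eucl_compact (2 * (M + 1)) \<Theta>"
    and "eucl_interior (2 * (M + 1)) \<Theta> \<noteq> {}"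
  shows "\<exists>c > 0. \<forall>\<theta> F. inPs K M h \<delta> \<zeta> \<epsilon> \<Theta> \<theta> F \<longrightarrow> c \<le> sing_min (Amat h K M (pF F))"
proof (cases "unisolvent (lam h True) (M + 1) {0<..<1} \<and> unisolvent (lam h False) (M + 1) {0<..<1}")
  case False
  then show ?thesis unfolding inPs_def by (intro exI[of _ 1]) auto
next
  case True
  let ?n = "M + 1"
  obtain c1 where c1: "c1 > 0" "\<forall>x u. (\<forall>j<?n. x j \<in> {\<epsilon>..1-\<epsilon>}) \<longrightarrow> (\<forall>j<?n. \<forall>k<?n. j\<noteq>k \<longrightarrow> \<epsilon> \<le> \<bar>x j - x k\<bar>) \<longrightarrow>
      c1 * (\<Sum>i<?n. (u i)^2) \<le> (\<Sum>j<?n. (\<Sum>i<?n. lam h True i (x j) * u i)^2)"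
    using core_d[where M=M and h=h and \<epsilon>=\<epsilon> and d=True, OF assms(2) assms(3) assms(6) assms(7)] True by blast
  obtain c0 where c0: "c0 > 0" "\<forall>x u. (\<forall>j<?n. x j \<in> {\<epsilon>..1-\<epsilon>}) \<longrightarrow> (\<forall>j<?n. \<forall>k<?n. j\<noteq>k \<longrightarrow> \<epsilon> \<le> \<bar>x j - x k\<bar>) \<longrightarrow>
      c0 * (\<Sum>i<?n. (u i)^2) \<le> (\<Sum>j<?n. (\<Sum>i<?n. lam h False i (x j) * u i)^2)"
    using core_d[where M=M and h=h and \<epsilon>=\<epsilon> and d=False, OF assms(2) assms(3) assms(6) assms(7)] True by blast
  define c where "c = min c1 c0"
  have cpos: "c > 0" unfolding c_def using c1 c0 by simp
  show ?thesis
  proof (intro exI[of _ "sqrt c"] conjI allI impI)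
    show "sqrt c > 0" using cpos by simp
    fix \<theta> F
    assume P: "inPs K M h \<delta> \<zeta> \<epsilon> \<Theta> \<theta> F"
    define p where "p = pF F"
    have pb: "\<forall>l\<le>K. \<epsilon> \<le> p l \<and> p l \<le> 1 - \<epsilon>" using P unfolding inPs_def inP_def p_def by blast
    obtain S where S: "S \<subseteq> {..K}" "card S = ?n" "\<forall>j\<in>S. \<forall>k\<in>S. j \<noteq> k \<longrightarrow> \<bar>p j - p k\<bar> \<ge> \<epsilon>"
      using P unfolding inPs_def p_def by blast
    have finS: "finite S" using S(1) finite_subset by blast
    obtain s where s: "bij_betw s {..<?n} S"
      using ex_bij_betw_nat_finite[OF finS] S(2) by (auto simp: lessThan_atLeast0)
    define x where "x j = p (s j)" for j
    have sS: "s j \<in> S" if "j < ?n" for j using s that by (auto simp: bij_betw_def)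
    have xb: "\<forall>j<?n. x j \<in> {\<epsilon>..1-\<epsilon>}" using sS S(1) pb unfolding x_def by auto
    have xs: "\<forall>j<?n. \<forall>k<?n. j\<noteq>k \<longrightarrow> \<epsilon> \<le> \<bar>x j - x k\<bar>"
    proof (intro allI impI)
      fix j k assume "j < ?n" "k < ?n" "j \<noteq> k"
      then have "s j \<noteq> s k" "s j \<in> S" "s k \<in> S" using s sS by (auto simp: bij_betw_def inj_on_def)
      then show "\<epsilon> \<le> \<bar>x j - x k\<bar>" using S(3) unfolding x_def by blast
    qed
    have A: "Amat h K M p \<in> carrier_mat (2 * (K + 1)) (2 * ?n)" unfolding Amat_def by simp
    have "sqrt c \<le> sing_min (Amat h K M p)"
    proof (rule sing_min_ge[OF A])
      show "0 < 2 * ?n" by simp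
      fix v :: "real vec" assume v: "v \<in> carrier_vec (2 * ?n)"
      define u1 where "u1 i = v $ i" for i
      define u0 where "u0 i = v $ (?n + i)" for i
      let ?w = "Amat h K M p *\<^sub>v v"
      have vv: "v \<bullet> v = (\<Sum>i<?n. (u1 i)^2) + (\<Sum>i<?n. (u0 i)^2)"
      proof -
        have "v \<bullet> v = (\<Sum>i<?n + ?n. v $ i * v $ i)" using v
          by (auto simp: scalar_prod_def lessThan_atLeast0 mult_2)
        then show ?thesis unfolding sum_split2 u1_def u0_def by (simp add: power2_eq_square)
      qed
      have ww: "?w \<bullet> ?w = (\<Sum>r<(K+1)+(K+1). (?w $ r)^2)" using A v
        by (auto simp: scalar_prod_def lessThan_atLeast0 mult_2 power2_eq_square)
      also have "\<dots> = (\<Sum>r<K+1. (?w $ r)^2) + (\<Sum>l<K+1. (?w $ (K + 1 + l))^2)"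
        by (rule sum_split2)
      also have "\<dots> = (\<Sum>r<K+1. (\<Sum>i<?n. lam h True i (p r) * u1 i)^2) + (\<Sum>l<K+1. (\<Sum>i<?n. lam h False i (p l) * u0 i)^2)"
        using Amat_row1[OF _ v] Amat_row0[OF _ v] unfolding u1_def u0_def by simp
      also have "\<dots> \<ge> (\<Sum>r\<in>S. (\<Sum>i<?n. lam h True i (p r) * u1 i)^2) + (\<Sum>l\<in>S. (\<Sum>i<?n. lam h False i (p l) * u0 i)^2)"
        using S(1) by (intro add_mono sum_mono2) auto
      finally have ge: "?w \<bullet> ?w \<ge> (\<Sum>r\<in>S. (\<Sum>i<?n. lam h True i (p r) * u1 i)^2) + (\<Sum>l\<in>S. (\<Sum>i<?n. lam h False i (p l) * u0 i)^2)" .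
      have r1: "(\<Sum>r\<in>S. (\<Sum>i<?n. lam h True i (p r) * u1 i)^2) = (\<Sum>j<?n. (\<Sum>i<?n. lam h True i (x j) * u1 i)^2)"
        unfolding x_def using sum.reindex_bij_betw[OF s, of "\<lambda>r. (\<Sum>i<?n. lam h True i (p r) * u1 i)^2"] by simp
      have r0: "(\<Sum>r\<in>S. (\<Sum>i<?n. lam h False i (p r) * u0 i)^2) = (\<Sum>j<?n. (\<Sum>i<?n. lam h False i (x j) * u0 i)^2)"
        unfolding x_def using sum.reindex_bij_betw[OF s, of "\<lambda>r. (\<Sum>i<?n. lam h False i (p r) * u0 i)^2"] by simp
      have b1: "c * (\<Sum>i<?n. (u1 i)^2) \<le> (\<Sum>j<?n. (\<Sum>i<?n. lam h True i (x j) * u1 i)^2)"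
      proof -
        have "c * (\<Sum>i<?n. (u1 i)^2) \<le> c1 * (\<Sum>i<?n. (u1 i)^2)"
          unfolding c_def by (intro mult_right_mono sum_nonneg) auto
        also have "\<dots> \<le> (\<Sum>j<?n. (\<Sum>i<?n. lam h True i (x j) * u1 i)^2)" using c1(2) xb xs by blast
        finally show ?thesis .
      qed
      have b0: "c * (\<Sum>i<?n. (u0 i)^2) \<le> (\<Sum>j<?n. (\<Sum>i<?n. lam h False i (x j) * u0 i)^2)"
      proof -
        have "c * (\<Sum>i<?n. (u0 i)^2) \<le> c0 * (\<Sum>i<?n. (u0 i)^2)"
          unfolding c_def by (intro mult_right_mono sum_nonneg) auto
        also have "\<dots> \<le> (\<Sum>j<?n. (\<Sum>i<?n. lam h False i (x j) * u0 i)^2)" using c0(2) xb xs by blast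
        finally show ?thesis .
      qed
      show "c * (v \<bullet> v) \<le> ?w \<bullet> ?w"
        unfolding vv using ge r1 r0 b1 b0 by (simp add: distrib_left)
    qed
    then show "sqrt c \<le> sing_min (Amat h K M (pF F))" unfolding p_def .
  qed
qed

end
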